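(* For $m=2,4,6$ let $\mathbb Z_m\subset SL_2(\mathbb Z)$ be the cyclic subgroup generated respectively by $\begin{pmatrix}-1&0\\0&-1\end{pmatrix}$, $\begin{pmatrix}0&-1\\1&0\end{pmatrix}$, $\begin{pmatrix}0&1\\-1&1\end{pmatrix}$, and let $G_m=\mathbb Z_m\ltimes\mathbb Z^2\subset\Gamma^J$ be the subgroup of pairs $(M,X)$ with $M\in\mathbb Z_m$, $X\in\mathbb Z^2$. Then $G_2\subset G_4$ and $G_2\subset G_6$, and the Jacobi group $\Gamma^J$ is isomorphic to the amalgamated free product $G_4 *_{G_2} G_6$.
   Context: The full Jacobi group is $\Gamma^J=SL_2(\mathbb Z)\ltimes\mathbb Z^2$, the set of pairs $(M,X)$ with $M\in SL_2(\mathbb Z)$, $X\in\mathbb Z^2$ a row vector, with multiplication $(M,X)(M',X')=(MM',XM'+X')$. *)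

theory Defs
  imports "HOL-Analysis.Analysis" "HOL-Algebra.Algebra"
begin

definition mat2 :: "int \<Rightarrow> int \<Rightarrow> int \<Rightarrow> int \<Rightarrow> int^2^2" where
  "mat2 a b c d = (\<chi> i j. if i = 1 then (if j = 1 then a else b) else (if j = 1 then c else d))"

definition SL2 :: "(int^2^2) monoid" where
  "SL2 = \<lparr>carrier = {M. det M = 1}, mult = (\<lambda>M N. matrix_matrix_mult M N), one = mat 1\<rparr>"

text \<open>The full Jacobi group: pairs (M,X), X a row vector, (M,X)(M',X') = (MM', XM'+X').\<close>
definition Jacobi :: "((int^2^2) \<times> (int^2)) monoid" where
  "Jacobi = \<lparr>carrier = {P. det (fst P) = 1},
             mult = (\<lambda>P Q. (matrix_matrix_mult (fst P) (fst Q), vector_matrix_mult (snd P) (fst Q) + snd Q)),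
             one = (mat 1, 0)\<rparr>"

definition cyc :: "int^2^2 \<Rightarrow> (int^2^2) set" where
  "cyc g = generate SL2 {g}"

definition semi :: "(int^2^2) set \<Rightarrow> ((int^2^2) \<times> (int^2)) monoid" where
  "semi Z = Jacobi\<lparr>carrier := {P. fst P \<in> Z}\<rparr>"

definition G2 where "G2 = semi (cyc (mat2 (-1) 0 0 (-1)))"
definition G4 where "G4 = semi (cyc (mat2 0 (-1) 1 0))"
definition G6 where "G6 = semi (cyc (mat2 0 1 (-1) 1))"

text \<open>Amalgamated free product G *_A H for a common subgroup A of G and H
  (all living in the same ambient type): words in letters from G (Inl) and H (Inr),
  modulo the congruence generated by multiplying adjacent letters of the same factor,
  deleting identity letters, and identifying a \<in> A in G with a \<in> A in H.\<close>

definition amalg_words :: "'a monoid \<Rightarrow> 'a monoid \<Rightarrow> ('a + 'a) list set" where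
  "amalg_words G H = {w. \<forall>l \<in> set w. (case l of Inl x \<Rightarrow> x \<in> carrier G | Inr y \<Rightarrow> y \<in> carrier H)}"

definition amalg_step :: "'a monoid \<Rightarrow> 'a monoid \<Rightarrow> 'a monoid \<Rightarrow> ('a + 'a) list rel" where
  "amalg_step A G H =
     {(u @ [Inl x, Inl y] @ v, u @ [Inl (x \<otimes>\<^bsub>G\<^esub> y)] @ v) | u v x y.
         u \<in> amalg_words G H \<and> v \<in> amalg_words G H \<and> x \<in> carrier G \<and> y \<in> carrier G}
   \<union> {(u @ [Inr x, Inr y] @ v, u @ [Inr (x \<otimes>\<^bsub>H\<^esub> y)] @ v) | u v x y.
         u \<in> amalg_words G H \<and> v \<in> amalg_words G H \<and> x \<in> carrier H \<and> y \<in> carrier H}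
   \<union> {(u @ [Inl \<one>\<^bsub>G\<^esub>] @ v, u @ v) | u v. u \<in> amalg_words G H \<and> v \<in> amalg_words G H}
   \<union> {(u @ [Inr \<one>\<^bsub>H\<^esub>] @ v, u @ v) | u v. u \<in> amalg_words G H \<and> v \<in> amalg_words G H}
   \<union> {(u @ [Inl a] @ v, u @ [Inr a] @ v) | u v a.
         u \<in> amalg_words G H \<and> v \<in> amalg_words G H \<and> a \<in> carrier A}"

definition amalg_rel :: "'a monoid \<Rightarrow> 'a monoid \<Rightarrow> 'a monoid \<Rightarrow> ('a + 'a) list rel" where
  "amalg_rel A G H = (amalg_step A G H \<union> (amalg_step A G H)\<inverse>)\<^sup>* \<inter> (amalg_words G H \<times> amalg_words G H)"

definition amalg :: "'a monoid \<Rightarrow> 'a monoid \<Rightarrow> 'a monoid \<Rightarrow> ('a + 'a) list set monoid" where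
  "amalg A G H =
     \<lparr>carrier = amalg_words G H // amalg_rel A G H,
      mult = (\<lambda>P Q. amalg_rel A G H `` {(SOME p. p \<in> P) @ (SOME q. q \<in> Q)}),
      one = amalg_rel A G H `` {[]}\<rparr>"

end

theory Submission
  imports Defs
begin

lemma sum_UNIV_2: "(\<Sum>i\<in>(UNIV::2 set). f i) = f 1 + f 2"
  by (simp add: UNIV_2)

lemma mat2_mult [simp]:
  "mat2 a b c d ** mat2 e f g h = mat2 (a*e+b*g) (a*f+b*h) (c*e+d*g) (c*f+d*h)"
  unfolding mat2_def matrix_matrix_mult_def
  by (simp add: vec_eq_iff forall_2 sum_UNIV_2)

lemma mat2_eq [simp]:
  "mat2 a b c d = mat2 a' b' c' d' \<longleftrightarrow> a = a' \<and> b = b' \<and> c = c' \<and> d = d'"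
  unfolding mat2_def by (auto simp: vec_eq_iff forall_2)

lemma mat2_entries: "M = mat2 (M$1$1) (M$1$2) (M$2$1) (M$2$2)"
  unfolding mat2_def by (simp add: vec_eq_iff forall_2)

lemma mat1_mat2: "mat 1 = mat2 1 0 0 1"
  unfolding mat2_def mat_def by (simp add: vec_eq_iff forall_2)

lemma det_mat2 [simp]: "det (mat2 a b c d) = a * d - b * c"
  by (simp add: det_2 mat2_def)

lemma mat2_nth [simp]: "mat2 a b c d $ 1 $ 1 = a" "mat2 a b c d $ 1 $ 2 = b"
  "mat2 a b c d $ 2 $ 1 = c" "mat2 a b c d $ 2 $ 2 = d"
  by (simp_all add: mat2_def)


lemma SL2_simps [simp]: "carrier SL2 = {M. det M = 1}" "mult SL2 = (\<lambda>M N. M ** N)" "one SL2 = mat 1"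
  by (simp_all add: SL2_def)

lemma det1_inv_ex:
  assumes "det (M::int^2^2) = 1" shows "\<exists>N. det N = 1 \<and> N ** M = mat 1"
proof -
  let ?a = "M$1$1" and ?b = "M$1$2" and ?c = "M$2$1" and ?d = "M$2$2"
  have M: "M = mat2 ?a ?b ?c ?d" by (rule mat2_entries)
  have d: "?a * ?d - ?b * ?c = 1" using assms by (subst (asm) M) simp
  show ?thesis
    by (rule exI[of _ "mat2 ?d (- ?b) (- ?c) ?a"], subst (2) M)
       (use d in \<open>simp add: mat1_mat2 algebra_simps\<close>)
qed

lemma group_SL2: "group SL2"
proof (rule groupI)
  show "\<And>x y. x \<in> carrier SL2 \<Longrightarrow> y \<in> carrier SL2 \<Longrightarrow> x \<otimes>\<^bsub>SL2\<^esub> y \<in> carrier SL2"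
    by (simp add: det_mul)
  show "\<one>\<^bsub>SL2\<^esub> \<in> carrier SL2" by simp
  show "\<And>x y z. x \<in> carrier SL2 \<Longrightarrow> y \<in> carrier SL2 \<Longrightarrow> z \<in> carrier SL2 \<Longrightarrow>
          x \<otimes>\<^bsub>SL2\<^esub> y \<otimes>\<^bsub>SL2\<^esub> z = x \<otimes>\<^bsub>SL2\<^esub> (y \<otimes>\<^bsub>SL2\<^esub> z)"
    by (simp add: matrix_mul_assoc)
  show "\<And>x. x \<in> carrier SL2 \<Longrightarrow> \<one>\<^bsub>SL2\<^esub> \<otimes>\<^bsub>SL2\<^esub> x = x" by simp
  show "\<And>x. x \<in> carrier SL2 \<Longrightarrow> \<exists>y\<in>carrier SL2. y \<otimes>\<^bsub>SL2\<^esub> x = \<one>\<^bsub>SL2\<^esub>"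
    using det1_inv_ex by auto
qed

lemma Jacobi_simps [simp]: "carrier Jacobi = {P. det (fst P) = 1}"
  "mult Jacobi = (\<lambda>P Q. (fst P ** fst Q, snd P v* fst Q + snd Q))"
  "one Jacobi = (mat 1, 0)"
  by (simp_all add: Jacobi_def)

lemma jm_assoc: "x \<otimes>\<^bsub>Jacobi\<^esub> y \<otimes>\<^bsub>Jacobi\<^esub> z = x \<otimes>\<^bsub>Jacobi\<^esub> (y \<otimes>\<^bsub>Jacobi\<^esub> z)"
  by (simp add: matrix_mul_assoc vector_matrix_mul_assoc vector_matrix_left_distrib add.assoc)

lemma jm_lone [simp]: "\<one>\<^bsub>Jacobi\<^esub> \<otimes>\<^bsub>Jacobi\<^esub> x = x"
  by simp

lemma jm_rone [simp]: "x \<otimes>\<^bsub>Jacobi\<^esub> \<one>\<^bsub>Jacobi\<^esub> = x"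
  by simp

lemma vm_uminus: "(- x) v* (A::int^2^2) = - (x v* A)"
  unfolding vector_matrix_mult_def by (simp add: vec_eq_iff sum_negf)

lemma group_Jacobi: "group Jacobi"
proof (rule groupI)
  show "\<And>x y. x \<in> carrier Jacobi \<Longrightarrow> y \<in> carrier Jacobi \<Longrightarrow> x \<otimes>\<^bsub>Jacobi\<^esub> y \<in> carrier Jacobi"
    by (simp add: det_mul)
  show "\<one>\<^bsub>Jacobi\<^esub> \<in> carrier Jacobi" by simp
  show "\<And>x y z. x \<in> carrier Jacobi \<Longrightarrow> y \<in> carrier Jacobi \<Longrightarrow> z \<in> carrier Jacobi \<Longrightarrow>
          x \<otimes>\<^bsub>Jacobi\<^esub> y \<otimes>\<^bsub>Jacobi\<^esub> z = x \<otimes>\<^bsub>Jacobi\<^esub> (y \<otimes>\<^bsub>Jacobi\<^esub> z)"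
    by (rule jm_assoc)
  show "\<And>x. x \<in> carrier Jacobi \<Longrightarrow> \<one>\<^bsub>Jacobi\<^esub> \<otimes>\<^bsub>Jacobi\<^esub> x = x" by simp
  fix x assume "x \<in> carrier Jacobi"
  then obtain N where N: "det N = 1" "N ** fst x = mat 1" using det1_inv_ex by auto
  have "(N, - (snd x v* N)) \<otimes>\<^bsub>Jacobi\<^esub> x = \<one>\<^bsub>Jacobi\<^esub>"
    using N by (simp add: vm_uminus vector_matrix_mul_assoc)
  then show "\<exists>y\<in>carrier Jacobi. y \<otimes>\<^bsub>Jacobi\<^esub> x = \<one>\<^bsub>Jacobi\<^esub>" using N by force
qed


lemma cyc_eq:
  assumes "det g = 1" "mat 1 \<in> F" "g \<in> F" "inv\<^bsub>SL2\<^esub> g \<in> F"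
    "\<And>x y. x \<in> F \<Longrightarrow> y \<in> F \<Longrightarrow> x ** y \<in> F" "F \<subseteq> generate SL2 {g}"
  shows "cyc g = F"
proof
  show "cyc g \<subseteq> F"
  proof
    fix x assume "x \<in> cyc g"
    then show "x \<in> F" unfolding cyc_def
      by (induction rule: generate.induct) (use assms in auto)
  qed
qed (use assms in \<open>simp add: cyc_def\<close>)

lemma inv_SL2:
  assumes "det g = 1" "det h = 1" "h ** g = mat 1" shows "inv\<^bsub>SL2\<^esub> g = h"
  using group.inv_equality[OF group_SL2, of h g] assms by simp

lemma cyc4: "cyc (mat2 0 (-1) 1 0) = {mat2 1 0 0 1, mat2 0 (-1) 1 0, mat2 (-1) 0 0 (-1), mat2 0 1 (-1) 0}"
proof (rule cyc_eq)
  let ?g = "mat2 0 (-1) 1 0"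
  show "inv\<^bsub>SL2\<^esub> ?g \<in> {mat2 1 0 0 1, mat2 0 (-1) 1 0, mat2 (-1) 0 0 (-1), mat2 0 1 (-1) 0}"
    by (subst inv_SL2[of _ "mat2 0 1 (-1) 0"]) (simp_all add: mat1_mat2)
  have g: "?g \<in> generate SL2 {?g}" by (rule generate.incl) simp
  have 1: "mat2 1 0 0 1 \<in> generate SL2 {?g}" using generate.one[of SL2 "{?g}"] by (simp add: mat1_mat2)
  have 2: "mat2 (-1) 0 0 (-1) \<in> generate SL2 {?g}" using generate.eng[OF g g] by simp
  have 3: "mat2 0 1 (-1) 0 \<in> generate SL2 {?g}" using generate.eng[OF 2 g] by simp
  show "{mat2 1 0 0 1, ?g, mat2 (-1) 0 0 (-1), mat2 0 1 (-1) 0} \<subseteq> generate SL2 {?g}"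
    using 1 2 3 g by simp
qed (auto simp: mat1_mat2)

lemma cyc6: "cyc (mat2 0 1 (-1) 1) = {mat2 1 0 0 1, mat2 0 1 (-1) 1, mat2 (-1) 1 (-1) 0,
   mat2 (-1) 0 0 (-1), mat2 0 (-1) 1 (-1), mat2 1 (-1) 1 0}"
proof (rule cyc_eq)
  let ?g = "mat2 0 1 (-1) 1"
  show "inv\<^bsub>SL2\<^esub> ?g \<in> {mat2 1 0 0 1, mat2 0 1 (-1) 1, mat2 (-1) 1 (-1) 0,
   mat2 (-1) 0 0 (-1), mat2 0 (-1) 1 (-1), mat2 1 (-1) 1 0}"
    by (subst inv_SL2[of _ "mat2 1 (-1) 1 0"]) (simp_all add: mat1_mat2)
  have g: "?g \<in> generate SL2 {?g}" by (rule generate.incl) simp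
  have 1: "mat2 1 0 0 1 \<in> generate SL2 {?g}" using generate.one[of SL2 "{?g}"] by (simp add: mat1_mat2)
  have 2: "mat2 (-1) 1 (-1) 0 \<in> generate SL2 {?g}" using generate.eng[OF g g] by simp
  have 3: "mat2 (-1) 0 0 (-1) \<in> generate SL2 {?g}" using generate.eng[OF 2 g] by simp
  have 4: "mat2 0 (-1) 1 (-1) \<in> generate SL2 {?g}" using generate.eng[OF 3 g] by simp
  have 5: "mat2 1 (-1) 1 0 \<in> generate SL2 {?g}" using generate.eng[OF 4 g] by simp
  show "{mat2 1 0 0 1, ?g, mat2 (-1) 1 (-1) 0,
   mat2 (-1) 0 0 (-1), mat2 0 (-1) 1 (-1), mat2 1 (-1) 1 0} \<subseteq> generate SL2 {?g}"
    using 1 2 3 4 5 g by simp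
qed (auto simp: mat1_mat2)

lemma cyc2: "cyc (mat2 (-1) 0 0 (-1)) = {mat2 1 0 0 1, mat2 (-1) 0 0 (-1)}"
proof (rule cyc_eq)
  let ?g = "mat2 (-1) 0 0 (-1)"
  show "inv\<^bsub>SL2\<^esub> ?g \<in> {mat2 1 0 0 1, ?g}"
    by (subst inv_SL2[of _ "?g"]) (simp_all add: mat1_mat2)
  have g: "?g \<in> generate SL2 {?g}" by (rule generate.incl) simp
  have 1: "mat2 1 0 0 1 \<in> generate SL2 {?g}" using generate.one[of SL2 "{?g}"] by (simp add: mat1_mat2)
  show "{mat2 1 0 0 1, ?g} \<subseteq> generate SL2 {?g}"
    using 1 g by simp
qed (auto simp: mat1_mat2)

definition "C2 = {P. fst P \<in> {mat2 1 0 0 1, mat2 (-1) 0 0 (-1)}}"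
definition "C4 = {P. fst P \<in> {mat2 1 0 0 1, mat2 0 (-1) 1 0, mat2 (-1) 0 0 (-1), mat2 0 1 (-1) 0}}"
definition "C6 = {P. fst P \<in> {mat2 1 0 0 1, mat2 0 1 (-1) 1, mat2 (-1) 1 (-1) 0,
   mat2 (-1) 0 0 (-1), mat2 0 (-1) 1 (-1), mat2 1 (-1) 1 0}}"

lemma carrier_G: "carrier G2 = C2" "carrier G4 = C4" "carrier G6 = C6"
  by (simp_all add: G2_def G4_def G6_def semi_def cyc2 cyc4 cyc6 C2_def C4_def C6_def)

lemma mult_G: "mult G2 = mult Jacobi" "mult G4 = mult Jacobi" "mult G6 = mult Jacobi"
   "one G2 = one Jacobi" "one G4 = one Jacobi" "one G6 = one Jacobi"
  by (simp_all add: G2_def G4_def G6_def semi_def)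

lemma G_eq: "G2 = Jacobi\<lparr>carrier := C2\<rparr>" "G4 = Jacobi\<lparr>carrier := C4\<rparr>" "G6 = Jacobi\<lparr>carrier := C6\<rparr>"
  by (simp_all add: G2_def G4_def G6_def semi_def cyc2 cyc4 cyc6 C2_def C4_def C6_def)


lemma subgroup_fst:
  fixes F :: "(int^2^2) set"
  assumes "\<forall>M\<in>F. det M = 1" "mat 1 \<in> F" "\<forall>M\<in>F. \<exists>N\<in>F. N ** M = mat 1"
    "\<forall>M\<in>F. \<forall>N\<in>F. M ** N \<in> F"
  shows "subgroup {P::(int^2^2) \<times> (int^2). fst P \<in> F} Jacobi"
proof (rule group.subgroupI[OF group_Jacobi])
  show "{P. fst P \<in> F} \<subseteq> carrier Jacobi" using assms(1) by auto
  show "{P. fst P \<in> F} \<noteq> {}" using assms(2) by auto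
  show "\<And>a b. a \<in> {P. fst P \<in> F} \<Longrightarrow> b \<in> {P. fst P \<in> F} \<Longrightarrow> a \<otimes>\<^bsub>Jacobi\<^esub> b \<in> {P. fst P \<in> F}"
    using assms(4) by auto
  fix a :: "(int^2^2) \<times> (int^2)" assume a: "a \<in> {P. fst P \<in> F}"
  then obtain N where N: "N \<in> F" "N ** fst a = mat 1" using assms(3) by auto
  have "inv\<^bsub>Jacobi\<^esub> a = (N, - (snd a v* N))"
    by (rule group.inv_equality[OF group_Jacobi])
       (use N a assms(1) in \<open>auto simp: vm_uminus vector_matrix_mul_assoc\<close>)
  then show "inv\<^bsub>Jacobi\<^esub> a \<in> {P. fst P \<in> F}" using N by simp
qed

lemma subC2: "subgroup C2 Jacobi"
  unfolding C2_def by (rule subgroup_fst) (auto simp: mat1_mat2)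
lemma subC4: "subgroup C4 Jacobi"
  unfolding C4_def by (rule subgroup_fst) (auto simp: mat1_mat2)
lemma subC6: "subgroup C6 Jacobi"
  unfolding C6_def by (rule subgroup_fst) (auto simp: mat1_mat2)

lemma C24: "C2 \<subseteq> C4" and C26: "C2 \<subseteq> C6"
  by (auto simp: C2_def C4_def C6_def)

lemma C_closed:
  "x \<in> C2 \<Longrightarrow> y \<in> C2 \<Longrightarrow> x \<otimes>\<^bsub>Jacobi\<^esub> y \<in> C2"
  "x \<in> C4 \<Longrightarrow> y \<in> C4 \<Longrightarrow> x \<otimes>\<^bsub>Jacobi\<^esub> y \<in> C4"
  "x \<in> C6 \<Longrightarrow> y \<in> C6 \<Longrightarrow> x \<otimes>\<^bsub>Jacobi\<^esub> y \<in> C6"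
  using subgroup.m_closed[OF subC2] subgroup.m_closed[OF subC4] subgroup.m_closed[OF subC6] by auto

lemma C_inv:
  "x \<in> C4 \<Longrightarrow> inv\<^bsub>Jacobi\<^esub> x \<in> C4"
  "x \<in> C6 \<Longrightarrow> inv\<^bsub>Jacobi\<^esub> x \<in> C6"
  using subgroup.m_inv_closed[OF subC4] subgroup.m_inv_closed[OF subC6] by auto

lemma C_carrier: "C4 \<subseteq> carrier Jacobi" "C6 \<subseteq> carrier Jacobi"
  using subgroup.subset[OF subC4] subgroup.subset[OF subC6] by auto

lemma one_C2: "\<one>\<^bsub>Jacobi\<^esub> \<in> C2" by (simp add: C2_def mat1_mat2)

abbreviation "W \<equiv> amalg_words G4 G6"
abbreviation "R \<equiv> amalg_rel G2 G4 G6"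
abbreviation "ST \<equiv> amalg_step G2 G4 G6"

lemma W_def: "W = {w. \<forall>l \<in> set w. (case l of Inl x \<Rightarrow> x \<in> C4 | Inr y \<Rightarrow> y \<in> C6)}"
  unfolding amalg_words_def carrier_G ..

lemma W_simps [simp]: "[] \<in> W" "(l # w \<in> W) = ((case l of Inl x \<Rightarrow> x \<in> C4 | Inr y \<Rightarrow> y \<in> C6) \<and> w \<in> W)"
  "(u @ v \<in> W) = (u \<in> W \<and> v \<in> W)"
  by (auto simp: W_def)

definition unl :: "'a + 'a \<Rightarrow> 'a" where "unl l = (case l of Inl x \<Rightarrow> x | Inr x \<Rightarrow> x)"

lemma unl_simps [simp]: "unl (Inl x) = x" "unl (Inr x) = x" by (simp_all add: unl_def)

fun ev :: "(((int^2^2) \<times> (int^2)) + ((int^2^2) \<times> (int^2))) list \<Rightarrow> (int^2^2) \<times> (int^2)" where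
  "ev [] = \<one>\<^bsub>Jacobi\<^esub>"
| "ev (l # w) = unl l \<otimes>\<^bsub>Jacobi\<^esub> ev w"

lemma ev_append: "ev (u @ v) = ev u \<otimes>\<^bsub>Jacobi\<^esub> ev v"
  by (induction u) (simp_all only: ev.simps append.simps jm_assoc jm_lone)

lemma ev_carrier: "w \<in> W \<Longrightarrow> ev w \<in> carrier Jacobi"
proof (induction w)
  case Nil then show ?case by simp
next
  case (Cons l w)
  have "unl l \<in> carrier Jacobi" using Cons.prems C_carrier by (auto split: sum.splits)
  then show ?case using Cons group.subgroup_self[OF group_Jacobi]
    by (simp del: Jacobi_simps add: monoid.m_closed[OF group.is_monoid[OF group_Jacobi]])
qed

lemma step_ev: "(x, y) \<in> ST \<Longrightarrow> ev x = ev y"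
  unfolding amalg_step_def by (auto simp: ev_append mult_G jm_assoc simp del: Jacobi_simps)

lemma rel_ev: "(x, y) \<in> R \<Longrightarrow> ev x = ev y"
proof -
  assume "(x, y) \<in> R"
  then have "(x, y) \<in> (ST \<union> ST\<inverse>)\<^sup>*" by (simp add: amalg_rel_def)
  then show ?thesis
    by (induction rule: rtrancl_induct) (auto dest: step_ev)
qed

lemma equiv_R: "equiv W R"
proof (rule equivI)
  show "R \<subseteq> W \<times> W" unfolding amalg_rel_def by auto
  show "refl_on W R" unfolding refl_on_def amalg_rel_def by auto
  show "sym R" unfolding amalg_rel_def
    using sym_rtrancl[OF sym_Un_converse[of ST]] by (auto simp: sym_def)
  show "trans R" unfolding amalg_rel_def
    using trans_rtrancl[of "ST \<union> ST\<inverse>"] by (auto simp: trans_def)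
qed

lemma R_W: "(x, y) \<in> R \<Longrightarrow> x \<in> W \<and> y \<in> W" by (simp add: amalg_rel_def)

lemma R_refl: "x \<in> W \<Longrightarrow> (x, x) \<in> R" by (simp add: amalg_rel_def)
lemma R_sym: "(x, y) \<in> R \<Longrightarrow> (y, x) \<in> R" using equiv_R by (auto simp: equiv_def sym_def)
lemma R_trans: "(x, y) \<in> R \<Longrightarrow> (y, z) \<in> R \<Longrightarrow> (x, z) \<in> R"
  using equiv_R by (auto simp: equiv_def trans_def)

lemma step_R: "(x, y) \<in> ST \<Longrightarrow> x \<in> W \<Longrightarrow> y \<in> W \<Longrightarrow> (x, y) \<in> R"
  by (auto simp: amalg_rel_def)
lemma step_R': "(y, x) \<in> ST \<Longrightarrow> x \<in> W \<Longrightarrow> y \<in> W \<Longrightarrow> (x, y) \<in> R"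
  by (auto simp: amalg_rel_def)

lemma step_ctx: "(x, y) \<in> ST \<Longrightarrow> p \<in> W \<Longrightarrow> q \<in> W \<Longrightarrow> (p @ x @ q, p @ y @ q) \<in> ST"
  unfolding amalg_step_def
  apply (elim UnE CollectE exE conjE)
      apply (rule UnI1, rule UnI1, rule UnI1, rule UnI1)
      apply (rule CollectI, rule_tac x="p @ u" in exI, rule_tac x="v @ q" in exI, simp add: carrier_G)
     apply (rule UnI1, rule UnI1, rule UnI1, rule UnI2)
     apply (rule CollectI, rule_tac x="p @ u" in exI, rule_tac x="v @ q" in exI, simp add: carrier_G)
    apply (rule UnI1, rule UnI1, rule UnI2)
    apply (rule CollectI, rule_tac x="p @ u" in exI, rule_tac x="v @ q" in exI, simp add: carrier_G)
   apply (rule UnI1, rule UnI2)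
   apply (rule CollectI, rule_tac x="p @ u" in exI, rule_tac x="v @ q" in exI, simp add: carrier_G)
  apply (rule UnI2)
  apply (rule CollectI, rule_tac x="p @ u" in exI, rule_tac x="v @ q" in exI, simp add: carrier_G)
  done

lemma R_ctx: "(x, y) \<in> R \<Longrightarrow> p \<in> W \<Longrightarrow> q \<in> W \<Longrightarrow> (p @ x @ q, p @ y @ q) \<in> R"
proof -
  assume xy: "(x, y) \<in> R" and pq: "p \<in> W" "q \<in> W"
  from xy have "(x, y) \<in> (ST \<union> ST\<inverse>)\<^sup>*" by (simp add: amalg_rel_def)
  then have "(p @ x @ q, p @ y @ q) \<in> (ST \<union> ST\<inverse>)\<^sup>*"
  proof (induction rule: rtrancl_induct)
    case base then show ?case by simp
  next
    case (step y z)
    then have "(p @ y @ q, p @ z @ q) \<in> ST \<union> ST\<inverse>" using step_ctx[OF _ pq] by auto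
    then show ?case using step.IH by (rule rtrancl_into_rtrancl[rotated])
  qed
  then show ?thesis using xy pq R_W[OF xy] by (simp add: amalg_rel_def)
qed


lemma mv_merge4: "x \<in> C4 \<Longrightarrow> y \<in> C4 \<Longrightarrow> p \<in> W \<Longrightarrow> q \<in> W \<Longrightarrow>
   (p @ [Inl x, Inl y] @ q, p @ [Inl (x \<otimes>\<^bsub>Jacobi\<^esub> y)] @ q) \<in> R"
  apply (rule step_R)
    apply (unfold amalg_step_def)
    apply (rule UnI1, rule UnI1, rule UnI1, rule UnI1)
    apply (rule CollectI, rule_tac x="p" in exI, rule_tac x="q" in exI, rule_tac x=x in exI, rule_tac x=y in exI)
  by (simp_all add: carrier_G mult_G C_closed del: Jacobi_simps)

lemma mv_merge6: "x \<in> C6 \<Longrightarrow> y \<in> C6 \<Longrightarrow> p \<in> W \<Longrightarrow> q \<in> W \<Longrightarrow>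
   (p @ [Inr x, Inr y] @ q, p @ [Inr (x \<otimes>\<^bsub>Jacobi\<^esub> y)] @ q) \<in> R"
  apply (rule step_R)
    apply (unfold amalg_step_def)
    apply (rule UnI1, rule UnI1, rule UnI1, rule UnI2)
    apply (rule CollectI, rule_tac x="p" in exI, rule_tac x="q" in exI, rule_tac x=x in exI, rule_tac x=y in exI)
  by (simp_all add: carrier_G mult_G C_closed del: Jacobi_simps)

lemma mv_del: "p \<in> W \<Longrightarrow> q \<in> W \<Longrightarrow> (p @ [Inl \<one>\<^bsub>Jacobi\<^esub>] @ q, p @ q) \<in> R"
  apply (rule step_R)
    apply (unfold amalg_step_def)
    apply (rule UnI1, rule UnI1, rule UnI2)
    apply (rule CollectI, rule_tac x="p" in exI, rule_tac x="q" in exI)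
  using one_C2 C24 by (auto simp: carrier_G mult_G simp del: Jacobi_simps)

lemma mv_swap: "a \<in> C2 \<Longrightarrow> p \<in> W \<Longrightarrow> q \<in> W \<Longrightarrow> (p @ [Inl a] @ q, p @ [Inr a] @ q) \<in> R"
  apply (rule step_R)
    apply (unfold amalg_step_def)
    apply (rule UnI2)
    apply (rule CollectI, rule_tac x="p" in exI, rule_tac x="q" in exI, rule_tac x=a in exI)
  using C24 C26 by (auto simp: carrier_G simp del: Jacobi_simps)

definition "sS = (mat2 0 (-1) 1 0, 0::int^2)"
definition "uA = (mat2 0 1 (-1) 1, 0::int^2)"
definition "uB = (mat2 (-1) 1 (-1) 0, 0::int^2)"
definition "Reps = {Inl sS, Inr uA, Inr uB}"
definition "alt w \<longleftrightarrow> set w \<subseteq> Reps \<and> successively (\<lambda>x y. isl x \<noteq> isl y) w"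

lemma reps_C: "sS \<in> C4" "uA \<in> C6" "uB \<in> C6"
  by (simp_all add: sS_def uA_def uB_def C4_def C6_def)

lemma alt_W: "alt w \<Longrightarrow> w \<in> W"
  using reps_C by (auto simp: alt_def Reps_def W_def)

lemma dec4: "y \<in> C4 \<Longrightarrow> y \<notin> C2 \<Longrightarrow> \<exists>a\<in>C2. y = sS \<otimes>\<^bsub>Jacobi\<^esub> a"
proof -
  assume y: "y \<in> C4" "y \<notin> C2"
  obtain mm xx where yMX: "y = (mm, xx)" by force
  show ?thesis
  proof (cases "mm = mat2 0 (-1) 1 0")
    case True
    then show ?thesis using yMX
      by (intro bexI[of _ "(mat2 1 0 0 1, xx)"]) (simp_all add: sS_def C2_def mat1_mat2[symmetric])
  next
    case False
    then have "mm = mat2 0 1 (-1) 0" using y yMX by (auto simp: C4_def C2_def)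
    then show ?thesis using yMX
      by (intro bexI[of _ "(mat2 (-1) 0 0 (-1), xx)"]) (simp_all add: sS_def C2_def)
  qed
qed

lemma dec6: "y \<in> C6 \<Longrightarrow> y \<notin> C2 \<Longrightarrow> \<exists>u\<in>{uA, uB}. \<exists>a\<in>C2. y = u \<otimes>\<^bsub>Jacobi\<^esub> a"
proof -
  assume y: "y \<in> C6" "y \<notin> C2"
  obtain mm xx where yMX: "y = (mm, xx)" by force
  have "mm = mat2 0 1 (-1) 1 \<or> mm = mat2 (-1) 1 (-1) 0 \<or> mm = mat2 0 (-1) 1 (-1) \<or> mm = mat2 1 (-1) 1 0"
    using y yMX by (auto simp: C6_def C2_def)
  then show ?thesis
  proof (elim disjE)
    assume "mm = mat2 0 1 (-1) 1" then show ?thesis using yMX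
      by (intro bexI[of _ uA] bexI[of _ "(mat2 1 0 0 1, xx)"]) (simp_all add: uA_def C2_def mat1_mat2[symmetric])
  next
    assume "mm = mat2 (-1) 1 (-1) 0" then show ?thesis using yMX
      by (intro bexI[of _ uB] bexI[of _ "(mat2 1 0 0 1, xx)"]) (simp_all add: uB_def C2_def mat1_mat2[symmetric])
  next
    assume "mm = mat2 0 (-1) 1 (-1)" then show ?thesis using yMX
      by (intro bexI[of _ uA] bexI[of _ "(mat2 (-1) 0 0 (-1), xx)"]) (simp_all add: uA_def C2_def)
  next
    assume "mm = mat2 1 (-1) 1 0" then show ?thesis using yMX
      by (intro bexI[of _ uB] bexI[of _ "(mat2 (-1) 0 0 (-1), xx)"]) (simp_all add: uB_def C2_def)
  qed
qed




lemma alt_snoc: "alt (v @ [x]) \<longleftrightarrow> alt v \<and> x \<in> Reps \<and> (v = [] \<or> isl (last v) \<noteq> isl x)"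
  by (auto simp: alt_def successively_append_iff)

lemma alt_last: "alt v \<Longrightarrow> v \<noteq> [] \<Longrightarrow> \<exists>v0. v = v0 @ [last v] \<and> alt v0 \<and> last v \<in> Reps \<and>
     (v0 = [] \<or> isl (last v0) \<noteq> isl (last v))"
  by (metis alt_snoc append_butlast_last_id)

lemma L4': "alt v \<Longrightarrow> (v = [] \<or> \<not> isl (last v)) \<Longrightarrow> y \<in> C4 \<Longrightarrow>
   \<exists>v' a. alt v' \<and> a \<in> C2 \<and> (v @ [Inl y], v' @ [Inl a]) \<in> R"
proof -
  assume v: "alt v" "v = [] \<or> \<not> isl (last v)" and y: "y \<in> C4"
  show ?thesis
  proof (cases "y \<in> C2")
    case True then show ?thesis using v y alt_W[OF v(1)] by (intro exI[of _ v] exI[of _ y]) (simp add: R_refl)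
  next
    case False
    then obtain a where a: "a \<in> C2" "y = sS \<otimes>\<^bsub>Jacobi\<^esub> a" using dec4 y by blast
    have "(v @ [Inl sS, Inl a] @ [], v @ [Inl y] @ []) \<in> R"
      using mv_merge4[of sS a v "[]"] a reps_C alt_W[OF v(1)] C24 by auto
    then have "(v @ [Inl y], (v @ [Inl sS]) @ [Inl a]) \<in> R" by (simp add: R_sym)
    moreover have "alt (v @ [Inl sS])" using v by (auto simp: alt_snoc Reps_def)
    ultimately show ?thesis using a by blast
  qed
qed


lemma L4: "alt v \<Longrightarrow> y \<in> C4 \<Longrightarrow>
   \<exists>v' a. alt v' \<and> a \<in> C2 \<and> (v @ [Inl y], v' @ [Inl a]) \<in> R"
proof -
  assume v: "alt v" and y: "y \<in> C4"
  show ?thesis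
  proof (cases "v = [] \<or> \<not> isl (last v)")
    case True then show ?thesis using L4' v y by blast
  next
    case False
    then obtain v0 where v0: "v = v0 @ [last v]" "alt v0" "last v \<in> Reps"
      "v0 = [] \<or> isl (last v0) \<noteq> isl (last v)" using alt_last[OF v] by blast
    have lv: "last v = Inl sS" using v0(3) False by (auto simp: Reps_def)
    have "(v0 @ [Inl sS, Inl y] @ [], v0 @ [Inl (sS \<otimes>\<^bsub>Jacobi\<^esub> y)] @ []) \<in> R"
      using mv_merge4[of sS y v0 "[]"] y reps_C alt_W[OF v0(2)] by auto
    then have 1: "(v @ [Inl y], v0 @ [Inl (sS \<otimes>\<^bsub>Jacobi\<^esub> y)]) \<in> R"
      using arg_cong[OF v0(1), of "\<lambda>z. z @ [Inl y]"] arg_cong[OF v0(1), of "\<lambda>z. z @ [Inr y]"] lv by simp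
    have "v0 = [] \<or> \<not> isl (last v0)" using v0(4) lv by auto
    then obtain v' a where "alt v'" "a \<in> C2" "(v0 @ [Inl (sS \<otimes>\<^bsub>Jacobi\<^esub> y)], v' @ [Inl a]) \<in> R"
      using L4'[OF v0(2)] C_closed(2)[OF reps_C(1) y] by blast
    then show ?thesis using 1 R_trans by blast
  qed
qed

lemma L6': "alt v \<Longrightarrow> (v = [] \<or> isl (last v)) \<Longrightarrow> y \<in> C6 \<Longrightarrow>
   \<exists>v' a. alt v' \<and> a \<in> C2 \<and> (v @ [Inr y], v' @ [Inl a]) \<in> R"
proof -
  assume v: "alt v" "v = [] \<or> isl (last v)" and y: "y \<in> C6"
  show ?thesis
  proof (cases "y \<in> C2")
    case True
    have "(v @ [Inl y] @ [], v @ [Inr y] @ []) \<in> R" using mv_swap[OF True] alt_W[OF v(1)] by simp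
    then show ?thesis using v True by (intro exI[of _ v] exI[of _ y]) (simp add: R_sym)
  next
    case False
    then obtain u a where a: "u \<in> {uA, uB}" "a \<in> C2" "y = u \<otimes>\<^bsub>Jacobi\<^esub> a" using dec6 y by blast
    have uC: "u \<in> C6" using a reps_C by auto
    have A: "(v @ [Inr u, Inr a], v @ [Inr y]) \<in> R"
      using mv_merge6[of u a v "[]"] a uC alt_W[OF v(1)] C26 by auto
    have B: "((v @ [Inr u]) @ [Inl a], v @ [Inr u, Inr a]) \<in> R"
      using mv_swap[OF a(2), of "v @ [Inr u]" "[]"] alt_W[OF v(1)] uC by simp
    have "(v @ [Inr y], (v @ [Inr u]) @ [Inl a]) \<in> R" using R_sym[OF R_trans[OF B A]] .
    moreover have "alt (v @ [Inr u])" using v a by (auto simp: alt_snoc Reps_def)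
    ultimately show ?thesis using a by blast
  qed
qed

lemma L6: "alt v \<Longrightarrow> y \<in> C6 \<Longrightarrow>
   \<exists>v' a. alt v' \<and> a \<in> C2 \<and> (v @ [Inr y], v' @ [Inl a]) \<in> R"
proof -
  assume v: "alt v" and y: "y \<in> C6"
  show ?thesis
  proof (cases "v = [] \<or> isl (last v)")
    case True then show ?thesis using L6' v y by blast
  next
    case False
    then obtain v0 where v0: "v = v0 @ [last v]" "alt v0" "last v \<in> Reps"
      "v0 = [] \<or> isl (last v0) \<noteq> isl (last v)" using alt_last[OF v] by blast
    have "last v = Inr uA \<or> last v = Inr uB" using v0(3) False by (auto simp: Reps_def)
    then obtain u where lv: "last v = Inr u" "u \<in> {uA, uB}" by blast
    have uC: "u \<in> C6" using lv reps_C by auto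
    have "(v0 @ [Inr u, Inr y] @ [], v0 @ [Inr (u \<otimes>\<^bsub>Jacobi\<^esub> y)] @ []) \<in> R"
      using mv_merge6[of u y v0 "[]"] y uC alt_W[OF v0(2)] by auto
    then have 1: "(v @ [Inr y], v0 @ [Inr (u \<otimes>\<^bsub>Jacobi\<^esub> y)]) \<in> R"
      using arg_cong[OF v0(1), of "\<lambda>z. z @ [Inl y]"] arg_cong[OF v0(1), of "\<lambda>z. z @ [Inr y]"] lv by simp
    have "v0 = [] \<or> isl (last v0)" using v0(4) lv by auto
    then obtain v' a where "alt v'" "a \<in> C2" "(v0 @ [Inr (u \<otimes>\<^bsub>Jacobi\<^esub> y)], v' @ [Inl a]) \<in> R"
      using L6'[OF v0(2)] C_closed(3)[OF uC y] by blast
    then show ?thesis using 1 R_trans by blast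
  qed
qed

lemma nf: "w \<in> W \<Longrightarrow> \<exists>v a. alt v \<and> a \<in> C2 \<and> (w, v @ [Inl a]) \<in> R"
proof (induction w rule: rev_induct)
  case Nil
  have "([] @ [Inl \<one>\<^bsub>Jacobi\<^esub>] @ [], [] @ []) \<in> R" by (rule mv_del) simp_all
  then have "([], [] @ [Inl \<one>\<^bsub>Jacobi\<^esub>]) \<in> R" by (simp add: R_sym)
  moreover have "alt []" by (simp add: alt_def)
  ultimately show ?case using one_C2 by blast
next
  case (snoc l w)
  then obtain v a where va: "alt v" "a \<in> C2" "(w, v @ [Inl a]) \<in> R" by auto
  have lW: "[l] \<in> W" using snoc.prems by simp
  have vW: "v \<in> W" using alt_W[OF va(1)] .
  have aC: "a \<in> C4" "a \<in> C6" using va(2) C24 C26 by auto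
  have 1: "(w @ [l], v @ [Inl a, l]) \<in> R" using R_ctx[OF va(3), of "[]" "[l]"] lW by simp
  show ?case
  proof (cases l)
    case (Inl x)
    have x: "x \<in> C4" using lW Inl by simp
    have "(v @ [Inl a, Inl x], v @ [Inl (a \<otimes>\<^bsub>Jacobi\<^esub> x)]) \<in> R"
      using mv_merge4[OF aC(1) x vW, of "[]"] by simp
    then have 2: "(w @ [l], v @ [Inl (a \<otimes>\<^bsub>Jacobi\<^esub> x)]) \<in> R" using R_trans[OF 1] Inl by simp
    obtain v' a' where "alt v'" "a' \<in> C2" "(v @ [Inl (a \<otimes>\<^bsub>Jacobi\<^esub> x)], v' @ [Inl a']) \<in> R"
      using L4[OF va(1) C_closed(2)[OF aC(1) x]] by blast
    then show ?thesis using 2 R_trans by blast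
  next
    case (Inr x)
    have x: "x \<in> C6" using lW Inr by simp
    have A: "(v @ [Inl a, Inr x], v @ [Inr a, Inr x]) \<in> R"
      using mv_swap[OF va(2) vW, of "[Inr x]"] x by simp
    have B: "(v @ [Inr a, Inr x], v @ [Inr (a \<otimes>\<^bsub>Jacobi\<^esub> x)]) \<in> R"
      using mv_merge6[OF aC(2) x vW, of "[]"] by simp
    have 2: "(w @ [l], v @ [Inr (a \<otimes>\<^bsub>Jacobi\<^esub> x)]) \<in> R"
      using R_trans[OF R_trans[OF 1 [unfolded Inr] A] B] Inr by simp
    obtain v' a' where "alt v'" "a' \<in> C2" "(v @ [Inr (a \<otimes>\<^bsub>Jacobi\<^esub> x)], v' @ [Inl a']) \<in> R"
      using L6[OF va(1) C_closed(3)[OF aC(2) x]] by blast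
    then show ?thesis using 2 R_trans by blast
  qed
qed



definition Wk :: "int^2^2 \<Rightarrow> bool" where
  "Wk M \<longleftrightarrow> M$1$1 > 0 \<and> M$2$2 > 0 \<and> M$1$2 \<le> 0 \<and> M$2$1 \<le> 0"
definition St :: "int^2^2 \<Rightarrow> bool" where
  "St M \<longleftrightarrow> Wk M \<and> M$1$2 + M$2$1 < 0"

lemma alt_Cons: "alt (x # w) \<longleftrightarrow> x \<in> Reps \<and> alt w \<and> (w = [] \<or> isl x \<noteq> isl (hd w))"
  by (auto simp: alt_def successively_Cons)

lemma ex_mat2: "\<exists>a b c d. M = mat2 a b c d"
  using mat2_entries by blast

lemma PP1: "alt w \<Longrightarrow> (w = [] \<or> hd w = Inl sS) \<Longrightarrow>
  \<exists>Q. Wk Q \<and> ((fst (ev w) = Q \<and> (w \<noteq> [] \<longrightarrow> St Q)) \<or> fst (ev w) = Q ** mat2 0 (-1) 1 0)"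
proof (induction "length w" arbitrary: w rule: less_induct)
  case less
  show ?case
  proof (cases w)
    case Nil
    then show ?thesis by (intro exI[of _ "mat 1"]) (simp add: Wk_def mat1_mat2)
  next
    case (Cons l w1)
    then have l: "l = Inl sS" using less.prems by simp
    show ?thesis
    proof (cases w1)
      case Nil
      then show ?thesis using Cons l
        by (intro exI[of _ "mat 1"]) (simp add: Wk_def mat1_mat2 sS_def)
    next
      case (Cons l2 w2)
      have a1: "alt w1" "isl l \<noteq> isl l2" using less.prems(1) \<open>w = l # w1\<close> Cons by (auto simp: alt_Cons)
      have a2: "l2 \<in> Reps" "alt w2" "w2 = [] \<or> isl l2 \<noteq> isl (hd w2)"
        using a1(1) Cons by (auto simp: alt_Cons)
      obtain U' where U': "l2 = Inr (U', 0)" "U' = mat2 0 1 (-1) 1 \<or> U' = mat2 (-1) 1 (-1) 0"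
        using a2(1) a1(2) l by (auto simp: Reps_def uA_def uB_def)
      have "w2 = [] \<or> hd w2 = Inl sS"
      proof (cases w2)
        case (Cons l3 w3)
        then have "l3 \<in> Reps" "isl l3" using a2 U' by (auto simp: alt_Cons)
        then show ?thesis using Cons by (auto simp: Reps_def)
      qed simp
      moreover have "length w2 < length w" using \<open>w = l # w1\<close> Cons by simp
      ultimately obtain Q where Q: "Wk Q" "(fst (ev w2) = Q \<and> (w2 \<noteq> [] \<longrightarrow> St Q)) \<or> fst (ev w2) = Q ** mat2 0 (-1) 1 0"
        using less.hyps a2(2) by blast
      obtain a b c d where abcd: "Q = mat2 a b c d" using ex_mat2 by blast
      have ev: "fst (ev w) = mat2 0 (-1) 1 0 ** (U' ** fst (ev w2))"
        using \<open>w = l # w1\<close> Cons l U' by (simp add: sS_def)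
      let ?Q' = "mat2 0 (-1) 1 0 ** U' ** Q"
      have St': "St ?Q'" using Q(1) U'(2) abcd by (auto simp: Wk_def St_def)
      from Q(2) show ?thesis
      proof
        assume "fst (ev w2) = Q \<and> (w2 \<noteq> [] \<longrightarrow> St Q)"
        then have "fst (ev w) = ?Q'" using ev by (simp add: matrix_mul_assoc)
        then show ?thesis using St' \<open>w = l # w1\<close> by (intro exI[of _ ?Q']) (simp add: St_def)
      next
        assume "fst (ev w2) = Q ** mat2 0 (-1) 1 0"
        then have "fst (ev w) = ?Q' ** mat2 0 (-1) 1 0" using ev by (simp add: matrix_mul_assoc)
        then show ?thesis using St' by (intro exI[of _ ?Q']) (simp add: St_def)
      qed
    qed
  qed
qed

lemma PP: "alt w \<Longrightarrow> fst (ev w) = mat2 1 0 0 1 \<or> fst (ev w) = mat2 (-1) 0 0 (-1) \<Longrightarrow> w = []"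
proof (rule ccontr)
  assume w: "alt w" "fst (ev w) = mat2 1 0 0 1 \<or> fst (ev w) = mat2 (-1) 0 0 (-1)" "w \<noteq> []"
  then obtain l w1 where lw: "w = l # w1" by (cases w) auto
  have a: "l \<in> Reps" "alt w1" "w1 = [] \<or> isl l \<noteq> isl (hd w1)" using w(1) lw by (auto simp: alt_Cons)
  show False
  proof (cases "l = Inl sS")
    case True
    then obtain Q where Q: "Wk Q" "(fst (ev w) = Q \<and> (w \<noteq> [] \<longrightarrow> St Q)) \<or> fst (ev w) = Q ** mat2 0 (-1) 1 0"
      using PP1[OF w(1)] lw by auto
    obtain a b c d where abcd: "Q = mat2 a b c d" using ex_mat2 by blast
    show False using Q w(2,3) abcd by (auto simp: Wk_def St_def)
  next
    case False
    then obtain U' where U': "l = Inr (U', 0)" "U' = mat2 0 1 (-1) 1 \<or> U' = mat2 (-1) 1 (-1) 0"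
      using a(1) by (auto simp: Reps_def uA_def uB_def)
    have "w1 = [] \<or> hd w1 = Inl sS"
    proof (cases w1)
      case (Cons l3 w3)
      then have "l3 \<in> Reps" "isl l3" using a U' by (auto simp: alt_Cons)
      then show ?thesis using Cons by (auto simp: Reps_def)
    qed simp
    then obtain Q where Q: "Wk Q" "fst (ev w1) = Q \<or> fst (ev w1) = Q ** mat2 0 (-1) 1 0"
      using PP1[OF a(2)] by auto
    have ev: "fst (ev w) = U' ** fst (ev w1)" using lw U' by simp
    obtain a b c d where abcd: "Q = mat2 a b c d" using ex_mat2 by blast
    show False using Q w(2) ev U'(2) abcd by (auto simp: Wk_def)
  qed
qed



lemma kernel: "w \<in> W \<Longrightarrow> ev w = \<one>\<^bsub>Jacobi\<^esub> \<Longrightarrow> (w, []) \<in> R"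
proof -
  assume w: "w \<in> W" "ev w = \<one>\<^bsub>Jacobi\<^esub>"
  obtain v a where va: "alt v" "a \<in> C2" "(w, v @ [Inl a]) \<in> R" using nf[OF w(1)] by blast
  have e: "ev v \<otimes>\<^bsub>Jacobi\<^esub> a = \<one>\<^bsub>Jacobi\<^esub>"
    using rel_ev[OF va(3)] w(2) by (simp add: ev_append del: Jacobi_simps)
  then have e1: "fst (ev v) ** fst a = mat 1" by simp
  have aa: "fst a ** fst a = mat 1" using va(2) by (auto simp: C2_def mat1_mat2)
  have "fst (ev v) = fst (ev v) ** (fst a ** fst a)" using aa by simp
  also have "\<dots> = fst a" by (metis matrix_mul_assoc e1 matrix_mul_lid)
  finally have "v = []" using PP[OF va(1)] va(2) by (auto simp: C2_def)
  then have "a = \<one>\<^bsub>Jacobi\<^esub>" using e by simp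
  then have 1: "(w, [Inl \<one>\<^bsub>Jacobi\<^esub>]) \<in> R" using va(3) \<open>v = []\<close> by simp
  have "([] @ [Inl \<one>\<^bsub>Jacobi\<^esub>] @ [], [] @ []) \<in> R" by (rule mv_del) simp_all
  then show ?thesis using R_trans[OF 1] by simp
qed

definition winv :: "(((int^2^2) \<times> (int^2)) + ((int^2^2) \<times> (int^2))) list \<Rightarrow> _" where
  "winv w = rev (map (map_sum (m_inv Jacobi) (m_inv Jacobi)) w)"

lemma winv_Cons: "winv (l # w) = winv w @ [map_sum (m_inv Jacobi) (m_inv Jacobi) l]"
  by (simp add: winv_def)

lemma winv_W: "w \<in> W \<Longrightarrow> winv w \<in> W"
proof (induction w)
  case Nil then show ?case by (simp add: winv_def)
next
  case (Cons l w)
  then show ?case by (cases l) (simp_all add: winv_Cons C_inv)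
qed

lemma ev_winv: "w \<in> W \<Longrightarrow> ev (winv w) = inv\<^bsub>Jacobi\<^esub> (ev w)"
proof (induction w)
  case Nil
  then show ?case by (simp add: winv_def monoid.inv_one[OF group.is_monoid[OF group_Jacobi], simplified])
next
  case (Cons l w)
  have lc: "unl l \<in> carrier Jacobi" using Cons.prems C_carrier by (auto split: sum.splits)
  have wc: "ev w \<in> carrier Jacobi" using Cons.prems ev_carrier by simp
  have "unl (map_sum (m_inv Jacobi) (m_inv Jacobi) l) = inv\<^bsub>Jacobi\<^esub> (unl l)"
    by (cases l) simp_all
  then have "ev (winv (l # w)) = inv\<^bsub>Jacobi\<^esub> (ev w) \<otimes>\<^bsub>Jacobi\<^esub> inv\<^bsub>Jacobi\<^esub> (unl l)"
    using Cons by (simp add: winv_Cons ev_append del: Jacobi_simps)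
  also have "\<dots> = inv\<^bsub>Jacobi\<^esub> (ev (l # w))"
    using group.inv_mult_group[OF group_Jacobi lc wc] by simp
  finally show ?case .
qed

lemma K: "w1 \<in> W \<Longrightarrow> w2 \<in> W \<Longrightarrow> ev w1 = ev w2 \<Longrightarrow> (w1, w2) \<in> R"
proof -
  assume w: "w1 \<in> W" "w2 \<in> W" "ev w1 = ev w2"
  have c: "ev w2 \<in> carrier Jacobi" using ev_carrier w(2) .
  have k1: "(w1 @ winv w2, []) \<in> R"
    by (rule kernel) (use w c winv_W in \<open>simp_all add: ev_append ev_winv group.r_inv[OF group_Jacobi] del: Jacobi_simps\<close>)
  have k2: "(winv w2 @ w2, []) \<in> R"
    by (rule kernel) (use w c winv_W in \<open>simp_all add: ev_append ev_winv group.l_inv[OF group_Jacobi] del: Jacobi_simps\<close>)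
  have 1: "(w1 @ winv w2 @ w2, w2) \<in> R" using R_ctx[OF k1, of "[]" w2] w(2) by simp
  have 2: "(w1 @ winv w2 @ w2, w1) \<in> R" using R_ctx[OF k2, of w1 "[]"] w(1) by simp
  show ?thesis using R_trans[OF R_sym[OF 2] 1] by simp
qed

lemma R_iff: "w1 \<in> W \<Longrightarrow> w2 \<in> W \<Longrightarrow> (w1, w2) \<in> R \<longleftrightarrow> ev w1 = ev w2"
  using K rel_ev by blast

definition reach :: "(int^2^2) \<times> (int^2) \<Rightarrow> bool" where "reach x \<longleftrightarrow> (\<exists>w\<in>W. ev w = x)"

lemma reach_mult: "reach x \<Longrightarrow> reach y \<Longrightarrow> reach (x \<otimes>\<^bsub>Jacobi\<^esub> y)"
  unfolding reach_def by (metis W_simps(3) ev_append)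

lemma reach_l4: "x \<in> C4 \<Longrightarrow> reach x"
  unfolding reach_def by (rule bexI[of _ "[Inl x]"]) (simp_all del: Jacobi_simps)
lemma reach_l6: "x \<in> C6 \<Longrightarrow> reach x"
  unfolding reach_def by (rule bexI[of _ "[Inr x]"]) (simp_all del: Jacobi_simps)

lemma reach_T: "reach (mat2 1 n 0 1, 0)"
proof -
  have T: "reach (mat2 1 1 0 1, 0)"
  proof -
    have "reach ((mat2 1 (-1) 1 0, 0) \<otimes>\<^bsub>Jacobi\<^esub> (mat2 0 1 (-1) 0, 0))"
      by (intro reach_mult reach_l4 reach_l6) (simp_all add: C4_def C6_def)
    then show ?thesis by simp
  qed
  have Ti: "reach (mat2 1 (-1) 0 1, 0)"
  proof -
    have "reach ((mat2 0 (-1) 1 0, 0) \<otimes>\<^bsub>Jacobi\<^esub> (mat2 0 1 (-1) 1, 0))"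
      by (intro reach_mult reach_l4 reach_l6) (simp_all add: C4_def C6_def)
    then show ?thesis by simp
  qed
  show ?thesis
  proof (induction n rule: int_induct[where k=0])
    case base
    have "reach (ev [])" unfolding reach_def by (rule bexI[of _ "[]"]) simp_all
    then show ?case by (simp add: mat1_mat2)
  next
    case (step1 i)
    from reach_mult[OF step1(2) T] show ?case by (simp add: add.commute)
  next
    case (step2 i)
    from reach_mult[OF step2(2) Ti] show ?case by simp
  qed
qed

lemma reach_M: "det M = 1 \<Longrightarrow> reach (M, 0)"
proof (induction "nat \<bar>M$2$1\<bar>" arbitrary: M rule: less_induct)
  case less
  obtain a b c d where M: "M = mat2 a b c d" using ex_mat2 by blast
  have det: "a * d - b * c = 1" using less.prems M by simp
  show ?case
  proof (cases "c = 0")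
    case True
    then have "a * d = 1" using det by simp
    then have "(a = 1 \<and> d = 1) \<or> (a = -1 \<and> d = -1)" by (simp add: zmult_eq_1_iff)
    then show ?thesis
    proof
      assume "a = 1 \<and> d = 1" then show ?thesis using M True reach_T by simp
    next
      assume ad: "a = -1 \<and> d = -1"
      have "reach ((mat2 (-1) 0 0 (-1), 0) \<otimes>\<^bsub>Jacobi\<^esub> (mat2 1 (-b) 0 1, 0))"
        by (intro reach_mult reach_l4 reach_T) (simp add: C4_def)
      then show ?thesis using M True ad by simp
    qed
  next
    case False
    define k where "k = a div c"
    define M' where "M' = mat2 (- c) (- d) (a - k * c) (b - k * d)"
    have m: "a - k * c = a mod c" unfolding k_def by (metis minus_mult_div_eq_mod mult.commute)
    have "\<bar>a mod c\<bar> < \<bar>c\<bar>" using False by (rule abs_mod_less)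
    then have lt: "nat \<bar>M'$2$1\<bar> < nat \<bar>M$2$1\<bar>" using m M by (simp add: M'_def)
    have dM': "det M' = 1" using det by (simp add: M'_def algebra_simps)
    have "reach (M', 0)" using less.hyps[OF lt dM'] .
    moreover have l: "(mat2 0 1 (-1) 0, 0) \<in> C4" by (simp add: C4_def)
    ultimately have "reach ((mat2 1 k 0 1, 0) \<otimes>\<^bsub>Jacobi\<^esub> ((mat2 0 1 (-1) 0, 0) \<otimes>\<^bsub>Jacobi\<^esub> (M', 0)))"
      using reach_mult[OF reach_T reach_mult[OF reach_l4[OF l]]] by blast
    then show ?thesis using M by (simp add: M'_def algebra_simps)
  qed
qed

lemma reach_all: "x \<in> carrier Jacobi \<Longrightarrow> reach x"
proof -
  assume x: "x \<in> carrier Jacobi"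
  obtain mm xx where MX: "x = (mm, xx)" by force
  have "reach ((mm, 0) \<otimes>\<^bsub>Jacobi\<^esub> (mat 1, xx))"
    using x MX by (intro reach_mult reach_M reach_l4) (simp_all add: C4_def mat1_mat2)
  then show ?thesis using MX by simp
qed



lemma amalg_simps: "carrier (amalg G2 G4 G6) = W // R"
  "mult (amalg G2 G4 G6) = (\<lambda>P Q. R `` {(SOME p. p \<in> P) @ (SOME q. q \<in> Q)})"
  by (simp_all add: amalg_def)

definition rep :: "(int^2^2) \<times> (int^2) \<Rightarrow> _" where
  "rep x = (SOME w. w \<in> W \<and> ev w = x)"

lemma rep: "x \<in> carrier Jacobi \<Longrightarrow> rep x \<in> W \<and> ev (rep x) = x"
  unfolding rep_def using reach_all[unfolded reach_def] by (metis (mono_tags, lifting) someI_ex)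

lemma class_eq: "w1 \<in> W \<Longrightarrow> w2 \<in> W \<Longrightarrow> R `` {w1} = R `` {w2} \<longleftrightarrow> ev w1 = ev w2"
  using eq_equiv_class_iff[OF equiv_R] R_iff by blast

lemma in_class: "p \<in> R `` {w} \<Longrightarrow> p \<in> W \<and> ev p = ev w"
proof -
  assume "p \<in> R `` {w}"
  then have "(w, p) \<in> R" by simp
  then show ?thesis using R_W rel_ev by auto
qed


lemma inj1: "inj_on (\<lambda>x. R `` {rep x}) (carrier Jacobi)"
proof (rule inj_onI)
  fix x y assume x: "x \<in> carrier Jacobi" and y: "y \<in> carrier Jacobi" and e: "R `` {rep x} = R `` {rep y}"
  have w: "rep x \<in> W" "rep y \<in> W" using rep[OF x] rep[OF y] by auto
  have "ev (rep x) = ev (rep y)" using iffD1[OF class_eq[OF w] e] .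
  then show "x = y" using rep[OF x] rep[OF y] by simp
qed

lemma surj1: "(\<lambda>x. R `` {rep x}) ` carrier Jacobi = W // R"
proof
  show "(\<lambda>x. R `` {rep x}) ` carrier Jacobi \<subseteq> W // R"
  proof (rule image_subsetI)
    fix x assume x: "x \<in> carrier Jacobi"
    show "R `` {rep x} \<in> W // R" by (rule quotientI) (rule conjunct1[OF rep[OF x]])
  qed
  show "W // R \<subseteq> (\<lambda>x. R `` {rep x}) ` carrier Jacobi"
  proof
    fix C assume "C \<in> W // R"
    then obtain w where w: "C = R `` {w}" "w \<in> W" by (rule quotientE)
    have c: "ev w \<in> carrier Jacobi" using ev_carrier w(2) .
    have w2: "rep (ev w) \<in> W" "w \<in> W" using rep[OF c] w by auto
    have "R `` {rep (ev w)} = R `` {w}" using iffD2[OF class_eq[OF w2]] rep[OF c] by simp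
    then have "R `` {rep (ev w)} = C" using w(1) by simp
    then have "C = (\<lambda>x. R `` {rep x}) (ev w)" by simp
    then show "C \<in> (\<lambda>x. R `` {rep x}) ` carrier Jacobi" by (rule rev_image_eqI[OF c])
  qed
qed


lemma iso_main: "Jacobi \<cong> amalg G2 G4 G6"
proof (rule is_isoI, rule isoI)
  let ?h = "\<lambda>x. R `` {rep x}"
  show "?h \<in> hom Jacobi (amalg G2 G4 G6)"
  proof (rule homI)
    fix x assume x: "x \<in> carrier Jacobi"
    show "?h x \<in> carrier (amalg G2 G4 G6)"
      unfolding amalg_simps by (rule quotientI) (rule conjunct1[OF rep[OF x]])
  next
    fix x y assume x: "x \<in> carrier Jacobi" and y: "y \<in> carrier Jacobi"
    have xy: "x \<otimes>\<^bsub>Jacobi\<^esub> y \<in> carrier Jacobi"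
      using x y by (simp add: det_mul)
    have "rep x \<in> ?h x" using R_refl rep[OF x] by simp
    then have px: "(SOME p. p \<in> ?h x) \<in> ?h x" by (rule someI)
    have "rep y \<in> ?h y" using R_refl rep[OF y] by simp
    then have py: "(SOME p. p \<in> ?h y) \<in> ?h y" by (rule someI)
    let ?p = "SOME p. p \<in> ?h x" and ?q = "SOME p. p \<in> ?h y"
    have "?p \<in> W" "ev ?p = x" using in_class[OF px] rep[OF x] by auto
    moreover have "?q \<in> W" "ev ?q = y" using in_class[OF py] rep[OF y] by auto
    ultimately have "R `` {rep (x \<otimes>\<^bsub>Jacobi\<^esub> y)} = R `` {?p @ ?q}"
      using rep[OF xy] by (subst class_eq) (simp_all add: ev_append del: Jacobi_simps)
    then show "?h (x \<otimes>\<^bsub>Jacobi\<^esub> y) = ?h x \<otimes>\<^bsub>amalg G2 G4 G6\<^esub> ?h y"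
      by (simp add: amalg_simps del: Jacobi_simps)
  qed
  show "bij_betw ?h (carrier Jacobi) (carrier (amalg G2 G4 G6))"
    unfolding bij_betw_def amalg_simps using inj1 surj1 by (rule conjI)
qed

theorem lemma6:
  shows "carrier G2 \<subseteq> carrier G4 \<and> carrier G2 \<subseteq> carrier G6 \<and>
         subgroup (carrier G2) G4 \<and> subgroup (carrier G2) G6 \<and>
         Jacobi \<cong> amalg G2 G4 G6"
proof -
  have s4: "subgroup (carrier G2) G4" unfolding carrier_G(1) G_eq(2)
    by (rule group.subgroup_incl[OF group_Jacobi subC2 subC4 C24])
  have s6: "subgroup (carrier G2) G6" unfolding carrier_G(1) G_eq(3)
    by (rule group.subgroup_incl[OF group_Jacobi subC2 subC6 C26])
  show ?thesis using C24 C26 iso_main s4 s6 unfolding carrier_G by blast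
qed

end
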